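(* Let $q$ be a power of an odd prime $p$, and let $\ell$ be a linearized polynomial over $\mathbb F_{q^2}$. Then the function $f(x)=x^{q+1}+\ell(x^2)$ is planar on $\mathbb F_{q^2}$ if and only if $\ell(u)^2-\mathrm N(u)$ is a nonzero square in $\mathbb F_q$ for every $u\in\mathbb F_{q^2}^*$ such that $\ell(u)\in\mathbb F_q$.
   Context: $\mathrm N$ denotes the norm map from $\mathbb F_{q^2}$ to $\mathbb F_q$, $\mathrm N(u)=u^{q+1}$. A linearized polynomial over $\mathbb F_{q^2}$ is a polynomial of the form $\sum_i c_i x^{p^i}$ with $c_i\in\mathbb F_{q^2}$ (it induces an $\mathbb F_p$-linear endomorphism of $\mathbb F_{q^2}$). A function $f:\mathbb F_{q^n}\to\mathbb F_{q^n}$ (induced by a polynomial) is planar if for every $c\in\mathbb F_{q^n}^*$ the map $x\mapsto f(x+c)-f(x)$ is a permutation of $\mathbb F_{q^n}$. *)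

theory Defs
  imports Main "HOL-Computational_Algebra.Primes"
begin

text \<open>Setting: the ambient finite field F_{q^2} is a finite field type 'a with CARD('a) = q^2.\<close>

definition linearized :: "nat \<Rightarrow> ('a::field \<Rightarrow> 'a) \<Rightarrow> bool" where
  "linearized p l \<longleftrightarrow> (\<exists>(n::nat) (c::nat \<Rightarrow> 'a). \<forall>x. l x = (\<Sum>i<n. c i * x ^ (p ^ i)))"

definition planar :: "('a::field \<Rightarrow> 'a) \<Rightarrow> bool" where
  "planar f \<longleftrightarrow> (\<forall>c. c \<noteq> 0 \<longrightarrow> bij (\<lambda>x. f (x + c) - f x))"

definition norm_q :: "nat \<Rightarrow> 'a::field \<Rightarrow> 'a" where
  "norm_q q u = u ^ (q + 1)"

definition subfield_q :: "nat \<Rightarrow> 'a::field set" where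
  "subfield_q q = {x. x ^ q = x}"

end

theory Submission
  imports Defs "HOL-Number_Theory.Residues" "HOL-Computational_Algebra.Polynomial"
begin
lemma fin_fermat:
  fixes x :: "'a::{field,finite}"
  assumes "x \<noteq> 0"
  shows "x ^ (card (UNIV :: 'a set) - 1) = 1"
proof -
  have "(\<Prod>y\<in>UNIV-{0}. x * y) = x ^ (card (UNIV :: 'a set) - 1) * \<Prod>(UNIV-{0::'a})"
    by (simp add: prod.distrib mult_ac)
  also have "(\<Prod>y\<in>UNIV-{0}. x * y) = (\<Prod>y\<in>UNIV-{0}. y)"
    by (rule prod.reindex_bij_witness[of _ "\<lambda>y. y / x" "\<lambda>y. x * y"]) (use assms in auto)
  finally have "(\<Prod>y\<in>UNIV-{0}. y) * 1 = (\<Prod>y\<in>UNIV-{0}. y) * x ^ (card (UNIV :: 'a set) - 1)"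
    by (simp add: mult_ac)
  moreover have "(\<Prod>y\<in>UNIV-{0::'a}. y) \<noteq> 0" by simp
  ultimately show ?thesis by (metis mult_left_cancel)
qed

lemma fieldC:
  fixes T t U u L :: "'b::field"
  assumes "T * t = 1"
  shows "t^2*(U*T^2 + 2*L*T + u) = U + 2*L*t + u*t^2"
proof -
  have "t^2*(U*T^2 + 2*L*T + u) = U*(T*t)^2 + 2*L*t*(T*t) + u*t^2"
    by (simp add: algebra_simps power2_eq_square)
  then show ?thesis using assms by simp
qed

lemma fieldSub:
  fixes t U u L L' :: "'b::field"
  shows "(u*t^2 + 2*L*t + U) - (U + 2*L'*t + u*t^2) = 2*t*(L - L')"
  by (simp add: algebra_simps)

lemma fieldD:
  fixes t U u L :: "'b::field"
  shows "(u*t + L)^2 = u*(u*t^2 + 2*L*t + U) + L^2 - U*u"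
  by (simp add: algebra_simps power2_eq_square)

lemma fieldE:
  fixes L s :: "'b::field"
  shows "L^2 - (s - L)^2 - s^2 = 2*s*(L - s)"
  by (simp add: algebra_simps power2_eq_square)

lemma fieldF:
  fixes u U L :: "'b::field"
  assumes "u \<noteq> 0"
  shows "u*(-L/u)^2 + 2*L*(-L/u) + U = (U*u - L^2)/u"
  using assms by (simp add: field_simps power2_eq_square)

lemma fieldG:
  fixes u U L s :: "'b::field"
  assumes "u \<noteq> 0"
  shows "u*((s-L)/u)^2 + 2*L*((s-L)/u) + U = (s^2 - L^2 + U*u)/u"
  using assms by (simp add: field_simps power2_eq_square)

locale ctx =
  fixes p q k :: nat and l :: "'a::{field,finite} \<Rightarrow> 'a"
  assumes pp: "prime p" and po: "odd p" and k1: "k \<ge> 1" and qd: "q = p ^ k"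
    and cardq: "card (UNIV :: 'a set) = q ^ 2"
    and lin: "linearized p l"
begin

lemma char: "CHAR('a) = p"
proof -
  have "CHAR('a) dvd p ^ (2*k)" using CHAR_dvd_CARD[where 'a='a] cardq qd
    by (simp add: power_mult mult.commute)
  moreover have "prime CHAR('a)"
    by (rule prime_CHAR_semidom) (simp add: finite_imp_CHAR_pos)
  ultimately have "CHAR('a) dvd p" using prime_dvd_power by blast
  then show ?thesis using pp \<open>prime CHAR('a)\<close> by (simp add: primes_dvd_imp_eq)
qed

lemma pCHAR: "prime CHAR('a)" using char pp by simp

lemma qodd: "odd q" using po qd by simp
lemma q1: "q > 1"
proof -
  have "p > 1" by (rule prime_gt_1_nat[OF pp])
  moreover have "k > 0" using k1 by simp
  ultimately show ?thesis unfolding qd by (rule one_less_power)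
qed

lemma fadd: "(x + y :: 'a) ^ q = x ^ q + y ^ q"
  by (rule freshmans_dream'[OF pCHAR]) (simp add: char qd)

lemma fneg: "(- x :: 'a) ^ q = - (x ^ q)"
  using qodd by simp

lemma fsub: "(x - y :: 'a) ^ q = x ^ q - y ^ q"
  using fadd[of x "-y"] fneg[of y] by simp

lemma fmul: "(x * y :: 'a) ^ q = x ^ q * y ^ q"
  by (simp add: power_mult_distrib)

lemma fq2: "(x :: 'a) ^ (q ^ 2) = x"
proof (cases "x = 0")
  case True then show ?thesis using q1 by simp
next
  case False
  have "q ^ 2 > 0" using q1 by simp
  then obtain n where n: "q ^ 2 = Suc n" using gr0_implies_Suc by blast
  then have "x ^ (q ^ 2) = x * x ^ n" by simp
  moreover have "card (UNIV :: 'a set) - 1 = n" using cardq n by simp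
  ultimately show ?thesis using fin_fermat[OF False] by simp
qed

lemma fqq: "((x :: 'a) ^ q) ^ q = x"
  using fq2[of x] by (simp add: power_mult[symmetric] power2_eq_square)

lemma f2: "(2::'a) ^ q = 2"
  using fadd[of 1 1] by simp

lemma two_nz: "(2::'a) \<noteq> 0"
proof
  assume "(2::'a) = 0"
  then have "of_nat 2 = (0::'a)" by simp
  then have "p dvd 2" using of_nat_eq_0_iff_char_dvd char by metis
  then have "p \<le> 2" by (simp add: dvd_imp_le)
  moreover have "p \<ge> 2" using pp prime_ge_2_nat by blast
  ultimately show False using po by simp
qed

lemma l_add: "l (x + y) = l x + l y"
proof -
  obtain n c where lc: "\<forall>x. l x = (\<Sum>i<n. c i * x ^ (p ^ i))"
    using lin unfolding linearized_def by blast
  have "\<And>i. (x + y) ^ (p ^ i) = x ^ (p ^ i) + y ^ (p ^ i)"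
    by (rule freshmans_dream'[OF pCHAR]) (simp add: char)
  then show ?thesis using lc by (simp add: distrib_left sum.distrib)
qed

lemma l0: "l 0 = 0"
proof -
  have "l 0 + 0 = l 0 + l 0" using l_add[of 0 0] by (simp only: add_0_right add_0_left)
  then have "0 = l 0" by (rule add_left_imp_eq)
  then show ?thesis by simp
qed
lemma l_neg: "l (- x) = - l x"
proof -
  have "l x + l (-x) = 0" using l_add[of x "-x"] l0 by simp
  then show ?thesis by (rule minus_unique[symmetric])
qed
lemma l_sub: "l (x - y) = l x - l y" using l_add[of x "-y"] l_neg[of y] by simp
lemma l2: "l (2 * x) = 2 * l x" using l_add[of x x] by (simp only: mult_2)

lemma Fq_card: "card {x::'a. x ^ q = x} \<le> q"
proof -
  define P :: "'a poly" where "P = monom 1 q + [:0, -1:]"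
  have dP: "degree P = q" unfolding P_def using q1
    by (subst degree_add_eq_left) (auto simp: degree_monom_eq)
  then have "P \<noteq> 0" using q1 by auto
  have "{x::'a. x ^ q = x} = {x. poly P x = 0}"
    by (auto simp: P_def poly_monom)
  then show ?thesis using card_poly_roots_bound[OF \<open>P \<noteq> 0\<close>] dP by simp
qed

lemma exists_nonFq: "\<exists>a::'a. a ^ q \<noteq> a"
proof (rule ccontr)
  assume "\<not> ?thesis"
  then have "{x::'a. x ^ q = x} = UNIV" by auto
  then have "q ^ 2 \<le> q" using Fq_card cardq by simp
  then show False using q1 by (simp add: power2_eq_square)
qed

lemma roots_card:
  assumes "m \<ge> 1"
  shows "card {z::'a. z ^ m = 1} \<le> m"
proof -
  define P :: "'a poly" where "P = monom 1 m + [:-1:]"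
  have dP: "degree P = m" unfolding P_def using assms
    by (subst degree_add_eq_left) (auto simp: degree_monom_eq)
  then have "P \<noteq> 0" using assms by auto
  have "{z::'a. z ^ m = 1} = {x. poly P x = 0}"
    by (auto simp: P_def poly_monom)
  then show ?thesis using card_poly_roots_bound[OF \<open>P \<noteq> 0\<close>] dP by simp
qed

lemma sqrt_ex:
  fixes D :: 'a
  assumes "D ^ q = D" "D \<noteq> 0"
  shows "\<exists>s. s ^ 2 = D"
proof -
  obtain j where j: "q = 2 * j + 1" using qodd oddE by blast
  define m where "m = 2 * j * (j + 1)"
  have m2: "2 * m = q ^ 2 - 1" unfolding m_def j by (simp add: power2_eq_square algebra_simps)
  have m1: "m \<ge> 1" using q1 j unfolding m_def by simp
  define N where "N = UNIV - {0::'a}"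
  define Sq where "Sq = (\<lambda>x. x ^ 2) ` N"
  have cN: "card N = q ^ 2 - 1" unfolding N_def using cardq by (simp add: card_Diff_singleton)
  have fib: "card {x \<in> N. x ^ 2 = y} = 2" if "y \<in> Sq" for y
  proof -
    obtain a where a: "a \<in> N" "y = a ^ 2" using \<open>y \<in> Sq\<close> unfolding Sq_def by auto
    have "{x \<in> N. x ^ 2 = y} = {a, -a}" using a unfolding N_def by (auto simp: power2_eq_iff)
    moreover have "a \<noteq> -a"
    proof
      assume "a = -a"
      have "2 * a = a + a" by (rule mult_2)
      also have "\<dots> = a + - a" using \<open>a = -a\<close> by (rule arg_cong)
      also have "\<dots> = 0" by simp
      finally have "2 * a = 0" .
      then show False using two_nz a unfolding N_def by simp
    qed
    ultimately show ?thesis by simp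
  qed
  have "(\<Sum>y\<in>Sq. card {x \<in> N. x ^ 2 = y}) = card N"
    using sum.group[of N Sq "\<lambda>x. x ^ 2" "\<lambda>_. (1::nat)"] unfolding Sq_def by simp
  then have "card N = 2 * card Sq" using fib by simp
  then have cSq: "card Sq = m" using cN m2 by simp
  have sub: "Sq \<subseteq> {z. z ^ m = 1}"
  proof
    fix z assume "z \<in> Sq"
    then obtain x where x: "x \<noteq> 0" "z = x ^ 2" unfolding Sq_def N_def by auto
    have "z ^ m = x ^ (q ^ 2 - 1)" using x m2 by (simp add: power_mult[symmetric])
    then show "z \<in> {z. z ^ m = 1}" using fin_fermat[OF x(1)] cardq by simp
  qed
  have "Sq = {z. z ^ m = 1}"
    by (rule card_seteq) (use sub roots_card[OF m1] cSq in auto)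
  moreover have "D ^ m = 1"
  proof -
    have "D * D ^ (2 * j) = D * 1" using assms(1) j by simp
    then have "D ^ (2 * j) = 1" using assms(2) by simp
    then have "(D ^ (2 * j)) ^ (j + 1) = 1" by simp
    moreover have "D ^ (2 * j * (j + 1)) = (D ^ (2 * j)) ^ (j + 1)" by (rule power_mult)
    ultimately show ?thesis unfolding m_def by (simp only:)
  qed
  ultimately have "D \<in> Sq" by (simp only: mem_Collect_eq)
  then show ?thesis unfolding Sq_def by auto
qed

definition Lc :: "'a \<Rightarrow> 'a \<Rightarrow> 'a" where
  "Lc c x = x ^ q * c + x * c ^ q + 2 * l (x * c)"

lemma g_eq: "((x + c) ^ (q + 1) + l ((x + c) ^ 2)) - (x ^ (q + 1) + l (x ^ 2))
   = Lc c x + (c ^ (q + 1) + l (c ^ 2))"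
proof -
  have A: "(x + c) ^ (q + 1) = x ^ (q + 1) + x ^ q * c + x * c ^ q + c ^ (q + 1)"
  proof -
    have "(x + c) ^ (q + 1) = (x ^ q + c ^ q) * (x + c)" using fadd by simp
    then show ?thesis by (simp add: algebra_simps)
  qed
  have B: "l ((x + c) ^ 2) = l (x ^ 2) + 2 * l (x * c) + l (c ^ 2)"
  proof -
    have "(x + c) ^ 2 = x ^ 2 + 2 * (x * c) + c ^ 2" by (simp add: power2_eq_square algebra_simps)
    then show ?thesis by (simp only: l_add l2)
  qed
  show ?thesis unfolding Lc_def A B by simp
qed

lemma Lc_sub: "Lc c (x - y) = Lc c x - Lc c y"
proof -
  have h: "l ((x - y) * c) = l (x * c) - l (y * c)" by (simp add: left_diff_distrib l_sub)
  show ?thesis unfolding Lc_def fsub h by (simp add: algebra_simps)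
qed

lemma planar_iff: "planar (\<lambda>x. x ^ (q + 1) + l (x ^ 2)) \<longleftrightarrow> (\<forall>c x. c \<noteq> 0 \<and> x \<noteq> 0 \<longrightarrow> Lc c x \<noteq> 0)"
proof -
  have key: "bij (\<lambda>x. ((x + c) ^ (q + 1) + l ((x + c) ^ 2)) - (x ^ (q + 1) + l (x ^ 2)))
      \<longleftrightarrow> (\<forall>x. x \<noteq> 0 \<longrightarrow> Lc c x \<noteq> 0)" for c
  proof -
    define g where "g = (\<lambda>x. ((x + c) ^ (q + 1) + l ((x + c) ^ 2)) - (x ^ (q + 1) + l (x ^ 2)))"
    have gd: "g x - g y = Lc c (x - y)" for x y unfolding g_def by (simp only: g_eq Lc_sub) simp
    have fU: "finite (UNIV :: 'a set)" by simp
    have "bij g \<longleftrightarrow> inj g" using finite_UNIV_inj_surj[OF fU, of g] unfolding bij_def by blast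
    also have "\<dots> \<longleftrightarrow> (\<forall>x. x \<noteq> 0 \<longrightarrow> Lc c x \<noteq> 0)"
    proof
      assume "inj g"
      show "\<forall>x. x \<noteq> 0 \<longrightarrow> Lc c x \<noteq> 0"
      proof (intro allI impI)
        fix x :: 'a assume "x \<noteq> 0"
        show "Lc c x \<noteq> 0"
        proof
          assume "Lc c x = 0"
          then have "g x - g 0 = 0" using gd[of x 0] by simp
          then have "g x = g 0" by simp
          then have "x = 0" using \<open>inj g\<close> by (simp add: inj_eq)
          then show False using \<open>x \<noteq> 0\<close> by simp
        qed
      qed
    next
      assume H: "\<forall>x. x \<noteq> 0 \<longrightarrow> Lc c x \<noteq> 0"
      show "inj g"
      proof (rule injI)
        fix x y assume "g x = g y"
        then have L0: "Lc c (x - y) = 0" using gd[of x y] by simp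
        show "x = y"
        proof (rule ccontr)
          assume "x \<noteq> y"
          then have "x - y \<noteq> 0" by simp
          then show False using H L0 by blast
        qed
      qed
    qed
    finally show ?thesis unfolding g_def .
  qed
  show ?thesis unfolding planar_def by (simp only: key) blast
qed

lemma fieldA:
  fixes x c C X L :: "'b::field"
  assumes "c \<noteq> 0"
  shows "(x*c)*(C/c)^2 + 2*L*(C/c) + X*C = (C/c)*(X*c + x*C + 2*L)"
  using assms by (simp add: field_simps power2_eq_square)

lemma fieldB:
  fixes U u t c L :: "'b::field"
  assumes "c \<noteq> 0" "t \<noteq> 0"
  shows "t*((U/(t*c))*c + (u/c)*(t*c) + 2*L) = u*t^2 + 2*L*t + U"
  using assms by (simp add: field_simps power2_eq_square)

lemma tpow: "(t::'a) ^ (q + 1) = t ^ q * t" unfolding Suc_eq_plus1[symmetric] by (rule power_Suc2)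

lemma lemA:
  assumes "c \<noteq> 0" "x \<noteq> 0" "Lc c x = 0"
  shows "\<exists>u t. u \<noteq> 0 \<and> t ^ (q + 1) = 1 \<and> u * t ^ 2 + 2 * l u * t + u ^ q = 0 \<and> u = x * c"
proof -
  define t where "t = c ^ q / c"
  have cq: "c ^ q \<noteq> 0" using assms by simp
  have "t ^ (q + 1) = (c ^ q) ^ q / c ^ q * (c ^ q / c)" unfolding t_def tpow by (simp add: power_divide)
  also have "\<dots> = 1" using fqq[of c] cq assms by simp
  finally have t1: "t ^ (q + 1) = 1" .
  have eq0: "(x * c) * t ^ 2 + 2 * l (x * c) * t + (x * c) ^ q = t * Lc c x"
    unfolding t_def Lc_def using fieldA[OF assms(1), of x "c^q" "l (x*c)" "x^q"] by (simp add: power_mult_distrib)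
  have eq: "(x * c) * t ^ 2 + 2 * l (x * c) * t + (x * c) ^ q = 0" using eq0 assms(3) by simp
  have "x * c \<noteq> 0" using assms by simp
  then show ?thesis using t1 eq by blast
qed

lemma lemC:
  fixes t :: 'a
  assumes "t ^ (q + 1) = 1"
  shows "\<exists>c. c \<noteq> 0 \<and> c ^ q = t * c"
proof -
  have key: "(a + t ^ q * a ^ q) ^ q = t * (a + t ^ q * a ^ q)" for a :: 'a
  proof -
    have "(a + t ^ q * a ^ q) ^ q = a ^ q + t * a" by (simp add: fadd fmul fqq)
    also have "\<dots> = t * a + t ^ (q + 1) * a ^ q" using assms by simp
    also have "\<dots> = t * (a + t ^ q * a ^ q)" by (simp add: algebra_simps)
    finally show ?thesis .
  qed
  show ?thesis
  proof (cases "1 + t ^ q = 0")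
    case False
    then show ?thesis using key[of 1] by auto
  next
    case True
    then have tq: "t ^ q = -1" by (simp add: add_eq_0_iff)
    obtain a :: 'a where a: "a ^ q \<noteq> a" using exists_nonFq by blast
    have "a + t ^ q * a ^ q \<noteq> 0" using a tq by simp
    then show ?thesis using key[of a] by blast
  qed
qed

lemma lemB:
  assumes "u \<noteq> 0" "t ^ (q + 1) = 1" "u * t ^ 2 + 2 * l u * t + u ^ q = 0"
  shows "\<exists>c x. c \<noteq> 0 \<and> x \<noteq> 0 \<and> Lc c x = 0"
proof -
  have t0: "t \<noteq> 0" proof assume "t = 0" then show False using assms(2) by simp qed
  obtain c where c: "c \<noteq> 0" "c ^ q = t * c" using lemC[OF assms(2)] by blast
  have "t * Lc c (u / c) = u * t ^ 2 + 2 * l u * t + u ^ q"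
    unfolding Lc_def using fieldB[OF c(1) t0, of "u^q" u "l u"] c t0 by (simp add: power_divide)
  then have "Lc c (u / c) = 0" using assms(3) t0 by simp
  then show ?thesis using c assms(1) by (intro exI[of _ c] exI[of _ "u / c"]) simp
qed

lemma t2q: "((t::'a)^2)^q = (t^q)^2"
  by (simp only: power_mult[symmetric] mult.commute)

lemma dir2:
  assumes C: "\<forall>u. u \<noteq> 0 \<and> l u ^ q = l u \<longrightarrow>
       (l u ^ 2 - u ^ (q + 1) \<noteq> 0 \<and> (\<exists>y. y ^ q = y \<and> l u ^ 2 - u ^ (q + 1) = y ^ 2))"
  shows "\<forall>c x. c \<noteq> 0 \<and> x \<noteq> 0 \<longrightarrow> Lc c x \<noteq> 0"
proof (intro allI impI notI)
  fix c x assume cx: "c \<noteq> 0 \<and> x \<noteq> 0" and L0: "Lc c x = 0"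
  obtain u t where u: "u \<noteq> 0" and t1: "t ^ (q + 1) = 1"
    and E: "u * t ^ 2 + 2 * l u * t + u ^ q = 0"
    using lemA[of c x] cx L0 by blast
  define L where "L = l u"
  have E': "u * t ^ 2 + 2 * L * t + u ^ q = 0" using E unfolding L_def .
  have t0: "t \<noteq> 0" proof assume "t = 0" then show False using t1 by simp qed
  have tq: "t ^ q * t = 1" using t1 unfolding tpow .
  have "(u * t ^ 2 + 2 * L * t + u ^ q) ^ q = u ^ q * (t ^ q) ^ 2 + 2 * L ^ q * t ^ q + u"
    by (simp only: fadd fmul fqq f2 t2q)
  then have Eq: "u ^ q * (t ^ q) ^ 2 + 2 * L ^ q * t ^ q + u = 0" using E' q1 by (simp add: zero_power)
  have E2: "u ^ q + 2 * L ^ q * t + u * t ^ 2 = 0"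
    using fieldC[OF tq, of "u ^ q" "L ^ q" u] Eq by simp
  have "2 * t * (L - L ^ q) = 0" using fieldSub[of u t L "u ^ q" "L ^ q"] E' E2 by simp
  then have Lq: "L ^ q = L" using two_nz t0 by simp
  define D where "D = L ^ 2 - u ^ (q + 1)"
  obtain y where D0: "D \<noteq> 0" and y: "y ^ q = y" "D = y ^ 2"
    using C u Lq unfolding D_def L_def by blast
  have uq: "u ^ (q + 1) = u ^ q * u" by (rule tpow)
  have "(u * t + L) ^ 2 = D" unfolding D_def uq using fieldD[of u t L "u ^ q"] E' by simp
  then have "(u * t + L) ^ 2 = y ^ 2" using y by simp
  then have "u * t + L = y \<or> u * t + L = - y" by (simp add: power2_eq_iff)
  then obtain \<sigma> where sg: "\<sigma> ^ q = \<sigma>" "\<sigma> ^ 2 = D" "u * t + L = \<sigma>"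
    using y fneg[of y] by (metis power2_minus)
  have "u ^ (q + 1) = u ^ (q + 1) * t ^ (q + 1)" using t1 by simp
  also have "\<dots> = (u * t) ^ (q + 1)" by (simp only: power_mult_distrib)
  also have "u * t = \<sigma> - L" using sg(3) by (simp add: algebra_simps)
  also have "(\<sigma> - L) ^ (q + 1) = (\<sigma> - L) ^ q * (\<sigma> - L)" by (rule tpow)
  also have "\<dots> = (\<sigma> - L) ^ 2" by (simp only: fsub sg(1) Lq power2_eq_square)
  finally have N: "u ^ (q + 1) = (\<sigma> - L) ^ 2" .
  have "L ^ 2 - (\<sigma> - L) ^ 2 - \<sigma> ^ 2 = 0" using N sg(2) unfolding D_def by simp
  then have "2 * \<sigma> * (L - \<sigma>) = 0" using fieldE[of L \<sigma>] by simp
  moreover have "\<sigma> \<noteq> 0" using sg(2) D0 by auto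
  ultimately have "L = \<sigma>" using two_nz by simp
  then have "u ^ (q + 1) = 0" using N by simp
  then show False using u by simp
qed

lemma dir1:
  assumes P: "\<forall>c x. c \<noteq> 0 \<and> x \<noteq> 0 \<longrightarrow> Lc c x \<noteq> 0"
    and u: "u \<noteq> 0" and Lq: "l u ^ q = l u"
  shows "l u ^ 2 - u ^ (q + 1) \<noteq> 0 \<and> (\<exists>y. y ^ q = y \<and> l u ^ 2 - u ^ (q + 1) = y ^ 2)"
proof -
  define L where "L = l u"
  have Lq': "L ^ q = L" using Lq unfolding L_def .
  have nosol: "u * t ^ 2 + 2 * L * t + u ^ q \<noteq> 0" if "t ^ (q + 1) = 1" for t
    using lemB[OF u that] P unfolding L_def by blast
  have uq: "u ^ (q + 1) = u ^ q * u" by (rule tpow)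
  have uN: "u ^ (q + 1) \<noteq> 0" using u by simp
  define D where "D = L ^ 2 - u ^ (q + 1)"
  have D0: "D \<noteq> 0"
  proof
    assume "D = 0"
    then have LL: "L ^ 2 = u ^ (q + 1)" unfolding D_def by simp
    define t where "t = - L / u"
    have "(- L) ^ (q + 1) = (- L) ^ q * (- L)" by (rule tpow)
    also have "\<dots> = L ^ 2" by (simp add: fneg Lq' power2_eq_square)
    finally have A: "(- L) ^ (q + 1) = L ^ 2" .
    have "t ^ (q + 1) = (- L) ^ (q + 1) / u ^ (q + 1)" unfolding t_def by (rule power_divide)
    then have "t ^ (q + 1) = L ^ 2 / u ^ (q + 1)" unfolding A .
    then have t1: "t ^ (q + 1) = 1" using LL uN by simp
    have "u * t ^ 2 + 2 * L * t + u ^ q = (u ^ q * u - L ^ 2) / u"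
      unfolding t_def by (rule fieldF[OF u])
    also have "\<dots> = 0" using LL uq by simp
    finally show False using nosol[OF t1] by simp
  qed
  have sq: "\<exists>y. y ^ q = y \<and> D = y ^ 2"
  proof (rule ccontr)
    assume ns: "\<not> ?thesis"
    have "D ^ q = (L ^ q) ^ 2 - (u ^ q) ^ q * u ^ q"
      unfolding D_def uq by (simp only: fsub fmul t2q)
    then have Dq: "D ^ q = D" unfolding D_def uq by (simp add: Lq' fqq mult.commute)
    obtain s where s: "s ^ 2 = D" using sqrt_ex[OF Dq D0] by blast
    have "(s ^ q) ^ 2 = s ^ 2" using Dq s t2q[of s] by simp
    then have "s ^ q = s \<or> s ^ q = - s" by (simp add: power2_eq_iff)
    then have sq: "s ^ q = - s" using ns s by blast
    define t where "t = (s - L) / u"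
    have "(s - L) ^ (q + 1) = (s - L) ^ q * (s - L)" by (rule tpow)
    also have "\<dots> = (- s - L) * (s - L)" by (simp only: fsub sq Lq')
    also have "\<dots> = L ^ 2 - s ^ 2" by (simp add: algebra_simps power2_eq_square)
    also have "\<dots> = u ^ (q + 1)" using s unfolding D_def by simp
    finally have "t ^ (q + 1) = u ^ (q + 1) / u ^ (q + 1)" unfolding t_def by (simp add: power_divide)
    then have t1: "t ^ (q + 1) = 1" using uN by simp
    have "u * t ^ 2 + 2 * L * t + u ^ q = (s ^ 2 - L ^ 2 + u ^ q * u) / u"
      unfolding t_def by (rule fieldG[OF u])
    also have "\<dots> = 0" using s uq unfolding D_def by simp
    finally show False using nosol[OF t1] by simp
  qed
  show ?thesis using D0 sq unfolding D_def L_def by blast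
qed

theorem main:
  "planar (\<lambda>x. x ^ (q + 1) + l (x ^ 2)) \<longleftrightarrow>
    (\<forall>u. u \<noteq> 0 \<and> l u \<in> subfield_q q \<longrightarrow>
       (l u ^ 2 - norm_q q u \<noteq> 0 \<and>
        (\<exists>y \<in> subfield_q q. l u ^ 2 - norm_q q u = y ^ 2)))"
  unfolding planar_iff subfield_q_def norm_q_def mem_Collect_eq Bex_def
  using dir1 dir2 by blast

end

theorem proposition2p1:
  fixes p q k :: nat and l :: "'a::{field,finite} \<Rightarrow> 'a"
  assumes "prime p" and "odd p" and "k \<ge> 1" and "q = p ^ k"
    and "card (UNIV :: 'a set) = q ^ 2"
    and "linearized p l"
  shows "planar (\<lambda>x. x ^ (q + 1) + l (x ^ 2)) \<longleftrightarrow>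
    (\<forall>u. u \<noteq> 0 \<and> l u \<in> subfield_q q \<longrightarrow>
       (l u ^ 2 - norm_q q u \<noteq> 0 \<and>
        (\<exists>y \<in> subfield_q q. l u ^ 2 - norm_q q u = y ^ 2)))"
proof -
  interpret ctx p q k l using assms by unfold_locales
  show ?thesis by (rule main)
qed

end
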